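(* Let $\mathcal{A}=\{1,\dots,m\}$, $\mathcal{B}=\{1,\dots,n\}$ and $\phi:\mathcal{A}\times\mathcal{B}\to\mathbb{R}^d$ with $\|\phi(a,b)\|_2\le L$. Let $\mu^*\in\Delta(\mathcal{A}),\nu^*\in\Delta(\mathcal{B})$ with $\min_{a,b}\{\mu^*(a),\nu^*(b)\}\ge\xi>0$, and let $\hat\mu\in\Delta(\mathcal{A}),\hat\nu\in\Delta(\mathcal{B})$ satisfy $\|\hat\mu-\mu^*\|_1\le\epsilon_\mu$ and $\|\hat\nu-\nu^*\|_1\le\epsilon_\nu$ with $\epsilon_\mu<\xi/2$ and $\epsilon_\nu<\xi/2$. Let $\epsilon_N=\epsilon_\mu+\epsilon_\nu$, $\hat X=X(\hat\mu,\hat\nu)$, $X^*=X(\mu^*,\nu^* )$, $\hat y=y(\hat\mu,\hat\nu)$, $y^*=y(\mu^*,\nu^* )$. Then $$\|\hat X-X^*\|_{op}\le C_X\epsilon_N,\qquad\|\hat y-y^*\|_2\le C_Y\epsilon_N,$$ with $C_X=2L\sqrt{m+n}$ and $C_Y=\sqrt{8(m+n)}/\xi$.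
   Context: For full-support $\mu,\nu$: $A(\nu)\in\mathbb{R}^{(m-1)\times d}$ has row $a-1$ ($a=2,\dots,m$) equal to $\sum_{b'\in\mathcal{B}}\nu(b')(\phi(a,b')-\phi(1,b'))^\top$; $B(\mu)\in\mathbb{R}^{(n-1)\times d}$ has row $b-1$ ($b=2,\dots,n$) equal to $\sum_{a'\in\mathcal{A}}\mu(a')(\phi(a',1)-\phi(a',b))^\top$; $c(\mu)_{a-1}=\log(\mu(a)/\mu(1))$; $d(\nu)_{b-1}=\log(\nu(b)/\nu(1))$; $X(\mu,\nu)=[A(\nu)^\top,B(\mu)^\top]^\top$ and $y(\mu,\nu)=[c(\mu)^\top,d(\nu)^\top]^\top$. $\|\cdot\|_{op}$ is the spectral norm. In the paper, $\hat\mu,\hat\nu$ are empirical frequency estimates of the QRE $(\mu^*,\nu^* )$ and the hypotheses hold on the high-probability event of the policy-estimation lemma. *)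

theory Defs
  imports "HOL-Analysis.Analysis"
begin

text \<open>Action sets are A = {1..m}, B = {1..n}; features phi a b :: real^'d.
  Policies are functions nat => real (only values on {1..m} resp. {1..n} matter).\<close>

definition is_dist :: "nat \<Rightarrow> (nat \<Rightarrow> real) \<Rightarrow> bool" where
  "is_dist k p \<longleftrightarrow> (\<forall>i\<in>{1..k}. 0 \<le> p i) \<and> (\<Sum>i\<in>{1..k}. p i) = 1"

definition l1_dist :: "nat \<Rightarrow> (nat \<Rightarrow> real) \<Rightarrow> (nat \<Rightarrow> real) \<Rightarrow> real" where
  "l1_dist k p q = (\<Sum>i\<in>{1..k}. \<bar>p i - q i\<bar>)"

definition Arow :: "(nat \<Rightarrow> nat \<Rightarrow> real^'d) \<Rightarrow> nat \<Rightarrow> (nat \<Rightarrow> real) \<Rightarrow> nat \<Rightarrow> real^'d" where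
  "Arow phi n nu a = (\<Sum>b'\<in>{1..n}. nu b' *\<^sub>R (phi a b' - phi 1 b'))"

definition Brow :: "(nat \<Rightarrow> nat \<Rightarrow> real^'d) \<Rightarrow> nat \<Rightarrow> (nat \<Rightarrow> real) \<Rightarrow> nat \<Rightarrow> real^'d" where
  "Brow phi m mu b = (\<Sum>a'\<in>{1..m}. mu a' *\<^sub>R (phi a' 1 - phi a' b))"

text \<open>X(mu,nu): rows indexed 1..(m-1)+(n-1); row i is A-row (a = i+1) for i \<le> m-1,
  otherwise B-row (b = i-(m-1)+1).\<close>
definition Xmat :: "(nat \<Rightarrow> nat \<Rightarrow> real^'d) \<Rightarrow> nat \<Rightarrow> nat \<Rightarrow> (nat \<Rightarrow> real) \<Rightarrow> (nat \<Rightarrow> real) \<Rightarrow> nat \<Rightarrow> real^'d" where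
  "Xmat phi m n mu nu i =
     (if i \<le> m - 1 then Arow phi n nu (i + 1) else Brow phi m mu (i - (m - 1) + 1))"

definition yvec :: "nat \<Rightarrow> (nat \<Rightarrow> real) \<Rightarrow> (nat \<Rightarrow> real) \<Rightarrow> nat \<Rightarrow> real" where
  "yvec m mu nu i =
     (if i \<le> m - 1 then ln (mu (i + 1) / mu 1) else ln (nu (i - (m - 1) + 1) / nu 1))"

definition op_norm_rows :: "nat \<Rightarrow> (nat \<Rightarrow> real^'d) \<Rightarrow> real" where
  "op_norm_rows r M = (SUP v\<in>cball 0 1. sqrt (\<Sum>i\<in>{1..r}. (M i \<bullet> v)\<^sup>2))"

definition vec_norm2 :: "nat \<Rightarrow> (nat \<Rightarrow> real) \<Rightarrow> real" where
  "vec_norm2 r y = sqrt (\<Sum>i\<in>{1..r}. (y i)\<^sup>2)"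

end

theory Submission
  imports Defs
begin

lemma l1_single:
  assumes "i \<in> {1..k}" shows "\<bar>p i - q i\<bar> \<le> l1_dist k p q"
  unfolding l1_dist_def by (rule member_le_sum) (use assms in auto)

lemma l1_pair:
  assumes "i \<in> {1..k}" "i \<noteq> 1" shows "\<bar>p i - q i\<bar> + \<bar>p 1 - q 1\<bar> \<le> l1_dist k p q"
proof -
  have "\<bar>p i - q i\<bar> + \<bar>p 1 - q 1\<bar> = (\<Sum>j\<in>{i,1}. \<bar>p j - q j\<bar>)" using assms by simp
  also have "\<dots> \<le> l1_dist k p q" unfolding l1_dist_def
    by (rule sum_mono2) (use assms in auto)
  finally show ?thesis .
qed

lemma ln_diff_bound:
  fixes x y c :: real
  assumes "c > 0" "x \<ge> c" "y \<ge> c"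
  shows "\<bar>ln x - ln y\<bar> \<le> \<bar>x - y\<bar> / c"
proof -
  have gen: "ln u - ln v \<le> \<bar>u - v\<bar> / c" if "u \<ge> c" "v \<ge> c" for u v :: real
  proof -
    have "ln u - ln v = ln (u / v)" using that assms by (simp add: ln_div)
    also have "\<dots> \<le> u / v - 1" using that assms by (intro ln_le_minus_one) auto
    also have "\<dots> = (u - v) / v" using that assms by (simp add: field_simps)
    also have "\<dots> \<le> \<bar>u - v\<bar> / v" using that assms by (simp add: divide_right_mono)
    also have "\<dots> \<le> \<bar>u - v\<bar> / c" using that assms by (simp add: frac_le)
    finally show ?thesis .
  qed
  show ?thesis using gen[of x y] gen[of y x] assms by (auto simp: abs_minus_commute)
qed

lemma op_norm_bound:
  fixes M :: "nat \<Rightarrow> real^'d"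
  assumes "\<forall>i\<in>{1..r}. norm (M i) \<le> K"
  shows "op_norm_rows r M \<le> sqrt (real r) * K"
  unfolding op_norm_rows_def
proof (rule cSUP_least)
  show "cball 0 1 \<noteq> {}" by simp
  fix v :: "real^'d" assume v: "v \<in> cball 0 1"
  have K0: "K \<ge> 0" if "r \<ge> 1" using assms that by (meson atLeastAtMost_iff le_refl norm_ge_zero order_trans)
  have "(\<Sum>i\<in>{1..r}. (M i \<bullet> v)\<^sup>2) \<le> (\<Sum>i\<in>{1..r}. K\<^sup>2)"
  proof (rule sum_mono)
    fix i assume i: "i \<in> {1..r}"
    have Ki: "K \<ge> 0" using assms i by (meson norm_ge_zero order_trans)
    have "\<bar>M i \<bullet> v\<bar> \<le> norm (M i) * norm v" by (rule Cauchy_Schwarz_ineq2)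
    also have "\<dots> \<le> K * 1" using v assms i Ki
      by (intro mult_mono) (auto simp: dist_norm)
    finally have "\<bar>M i \<bullet> v\<bar> \<le> K" by simp
    thus "(M i \<bullet> v)\<^sup>2 \<le> K\<^sup>2"
      by (metis abs_ge_zero abs_le_square_iff abs_of_nonneg order_trans power2_abs)
  qed
  also have "\<dots> = real r * K\<^sup>2" by simp
  finally have "sqrt (\<Sum>i\<in>{1..r}. (M i \<bullet> v)\<^sup>2) \<le> sqrt (real r * K\<^sup>2)" by simp
  also have "\<dots> = sqrt (real r) * K"
    using K0 by (cases "r \<ge> 1") (auto simp: real_sqrt_mult)
  finally show "sqrt (\<Sum>i\<in>{1..r}. (M i \<bullet> v)\<^sup>2) \<le> sqrt (real r) * K" .
qed

lemma vec_norm_bound: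
  assumes "\<forall>i\<in>{1..r}. \<bar>y i\<bar> \<le> K"
  shows "vec_norm2 r y \<le> sqrt (real r) * K"
proof -
  have K0: "K \<ge> 0" if "r \<ge> 1" using assms that by (meson atLeastAtMost_iff le_refl abs_ge_zero order_trans)
  have "(\<Sum>i\<in>{1..r}. (y i)\<^sup>2) \<le> (\<Sum>i\<in>{1..r}. K\<^sup>2)"
    using assms by (intro sum_mono) (metis abs_ge_zero abs_le_square_iff abs_of_nonneg order_trans power2_abs)
  also have "\<dots> = real r * K\<^sup>2" by simp
  finally have "vec_norm2 r y \<le> sqrt (real r * K\<^sup>2)" unfolding vec_norm2_def by simp
  also have "\<dots> = sqrt (real r) * K"
    using K0 by (cases "r \<ge> 1") (auto simp: real_sqrt_mult)
  finally show ?thesis .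
qed

lemma row_diff_bound:
  fixes phi :: "nat \<Rightarrow> nat \<Rightarrow> real^'d"
  assumes "\<forall>b\<in>{1..k}. norm (f b) \<le> 2 * L"
  shows "norm (\<Sum>b\<in>{1..k}. p b *\<^sub>R f b - q b *\<^sub>R f b) \<le> l1_dist k p q * (2 * L)"
proof -
  have "norm (\<Sum>b\<in>{1..k}. p b *\<^sub>R f b - q b *\<^sub>R f b) \<le> (\<Sum>b\<in>{1..k}. norm (p b *\<^sub>R f b - q b *\<^sub>R f b))"
    by (rule norm_sum)
  also have "\<dots> \<le> (\<Sum>b\<in>{1..k}. \<bar>p b - q b\<bar> * (2 * L))"
  proof (rule sum_mono)
    fix b assume "b \<in> {1..k}"
    then show "norm (p b *\<^sub>R f b - q b *\<^sub>R f b) \<le> \<bar>p b - q b\<bar> * (2 * L)"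
      using assms by (simp add: scaleR_diff_left[symmetric] mult_left_mono)
  qed
  also have "\<dots> = l1_dist k p q * (2 * L)" unfolding l1_dist_def by (simp add: sum_distrib_right)
  finally show ?thesis .
qed

theorem lemma2:
  fixes phi :: "nat \<Rightarrow> nat \<Rightarrow> real^'d"
    and m n :: nat and L \<xi> \<epsilon>\<mu> \<epsilon>\<nu> :: real
    and \<mu>s \<nu>s \<mu>h \<nu>h :: "nat \<Rightarrow> real"
  assumes "m \<ge> 1" and "n \<ge> 1"
    and "\<forall>a\<in>{1..m}. \<forall>b\<in>{1..n}. norm (phi a b) \<le> L"
    and "is_dist m \<mu>s" and "is_dist n \<nu>s"
    and "\<xi> > 0"
    and "\<forall>a\<in>{1..m}. \<mu>s a \<ge> \<xi>" and "\<forall>b\<in>{1..n}. \<nu>s b \<ge> \<xi>"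
    and "is_dist m \<mu>h" and "is_dist n \<nu>h"
    and "l1_dist m \<mu>h \<mu>s \<le> \<epsilon>\<mu>" and "l1_dist n \<nu>h \<nu>s \<le> \<epsilon>\<nu>"
    and "\<epsilon>\<mu> < \<xi> / 2" and "\<epsilon>\<nu> < \<xi> / 2"
  shows "(op_norm_rows ((m - 1) + (n - 1))
           (\<lambda>i. Xmat phi m n \<mu>h \<nu>h i - Xmat phi m n \<mu>s \<nu>s i)
         \<le> (2 * L * sqrt (real (m + n))) * (\<epsilon>\<mu> + \<epsilon>\<nu>)) \<and>
         (vec_norm2 ((m - 1) + (n - 1)) (\<lambda>i. yvec m \<mu>h \<nu>h i - yvec m \<mu>s \<nu>s i)
         \<le> (sqrt (8 * real (m + n)) / \<xi>) * (\<epsilon>\<mu> + \<epsilon>\<nu>))"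
proof -
  let ?r = "(m - 1) + (n - 1)"
  let ?e = "\<epsilon>\<mu> + \<epsilon>\<nu>"
  have L0: "L \<ge> 0" using assms(1,2,3) by (meson atLeastAtMost_iff le_refl norm_ge_zero order_trans)
  have l1m0: "l1_dist m \<mu>h \<mu>s \<ge> 0" unfolding l1_dist_def by (simp add: sum_nonneg)
  have l1n0: "l1_dist n \<nu>h \<nu>s \<ge> 0" unfolding l1_dist_def by (simp add: sum_nonneg)
  have em0: "\<epsilon>\<mu> \<ge> 0" and en0: "\<epsilon>\<nu> \<ge> 0" using l1m0 l1n0 assms(11,12) by auto
  have sq: "sqrt (real ?r) \<le> sqrt (real (m + n))" by simp
  have rowb: "\<forall>i\<in>{1..?r}. norm (Xmat phi m n \<mu>h \<nu>h i - Xmat phi m n \<mu>s \<nu>s i) \<le> 2 * L * ?e"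
  proof
    fix i assume i: "i \<in> {1..?r}"
    show "norm (Xmat phi m n \<mu>h \<nu>h i - Xmat phi m n \<mu>s \<nu>s i) \<le> 2 * L * ?e"
    proof (cases "i \<le> m - 1")
      case True
      let ?a = "i + 1"
      have a: "?a \<in> {1..m}" using True i assms(1) by auto
      have "Xmat phi m n \<mu>h \<nu>h i - Xmat phi m n \<mu>s \<nu>s i
          = (\<Sum>b\<in>{1..n}. \<nu>h b *\<^sub>R (phi ?a b - phi 1 b) - \<nu>s b *\<^sub>R (phi ?a b - phi 1 b))"
        using True by (simp add: Xmat_def Arow_def sum_subtractf)
      also have "norm \<dots> \<le> l1_dist n \<nu>h \<nu>s * (2 * L)"
      proof (rule row_diff_bound, intro ballI)
        fix b assume b: "b \<in> {1..n}"
        have "norm (phi ?a b - phi 1 b) \<le> norm (phi ?a b) + norm (phi 1 b)" by (rule norm_triangle_ineq4)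
        also have "\<dots> \<le> L + L" using assms(3) a b assms(1) by (intro add_mono) auto
        finally show "norm (phi ?a b - phi 1 b) \<le> 2 * L" by simp
      qed
      also have "\<dots> \<le> ?e * (2 * L)" using assms(12) em0 L0 by (intro mult_right_mono) auto
      finally show ?thesis by (simp add: mult_ac)
    next
      case False
      let ?b = "i - (m - 1) + 1"
      have bb: "?b \<in> {1..n}" using False i assms(2) by auto
      have "Xmat phi m n \<mu>h \<nu>h i - Xmat phi m n \<mu>s \<nu>s i
          = (\<Sum>a\<in>{1..m}. \<mu>h a *\<^sub>R (phi a 1 - phi a ?b) - \<mu>s a *\<^sub>R (phi a 1 - phi a ?b))"
        using False by (simp add: Xmat_def Brow_def sum_subtractf)
      also have "norm \<dots> \<le> l1_dist m \<mu>h \<mu>s * (2 * L)"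
      proof (rule row_diff_bound, intro ballI)
        fix a assume a: "a \<in> {1..m}"
        have "norm (phi a 1 - phi a ?b) \<le> norm (phi a 1) + norm (phi a ?b)" by (rule norm_triangle_ineq4)
        also have "\<dots> \<le> L + L" using assms(3) a bb assms(2) by (intro add_mono) auto
        finally show "norm (phi a 1 - phi a ?b) \<le> 2 * L" by simp
      qed
      also have "\<dots> \<le> ?e * (2 * L)" using assms(11) en0 L0 by (intro mult_right_mono) auto
      finally show ?thesis by (simp add: mult_ac)
    qed
  qed
  have X: "op_norm_rows ?r (\<lambda>i. Xmat phi m n \<mu>h \<nu>h i - Xmat phi m n \<mu>s \<nu>s i)
      \<le> (2 * L * sqrt (real (m + n))) * ?e"
  proof -
    have "op_norm_rows ?r (\<lambda>i. Xmat phi m n \<mu>h \<nu>h i - Xmat phi m n \<mu>s \<nu>s i) \<le> sqrt (real ?r) * (2 * L * ?e)"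
      by (rule op_norm_bound) (use rowb in simp)
    also have "\<dots> \<le> sqrt (real (m + n)) * (2 * L * ?e)"
      using sq L0 em0 en0 by (intro mult_right_mono) auto
    finally show ?thesis by (simp add: algebra_simps)
  qed
  have lnb: "\<bar>ln (ph a / ph 1) - ln (ps a / ps 1)\<bar> \<le> 2 * e / \<xi>"
    if k: "k \<ge> 1" and a: "a \<in> {1..k}" and ps: "\<forall>j\<in>{1..k}. ps j \<ge> \<xi>"
       and l1: "l1_dist k ph ps \<le> e" and e: "e < \<xi> / 2"
    for k a e and ph ps :: "nat \<Rightarrow> real"
  proof -
    have one: "1 \<in> {1..k}" using k by simp
    have ph_lb: "ph j \<ge> \<xi> / 2" and ps_lb: "ps j \<ge> \<xi> / 2" if "j \<in> {1..k}" for j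
    proof -
      have "\<bar>ph j - ps j\<bar> \<le> e" using l1_single[OF that, of ph ps] l1 by simp
      moreover have "ps j \<ge> \<xi>" using ps that by blast
      ultimately show "ph j \<ge> \<xi> / 2" "ps j \<ge> \<xi> / 2" using e assms(6) by linarith+
    qed
    have c: "\<xi> / 2 > 0" using assms(6) by simp
    have pos: "ph a > 0" "ph 1 > 0" "ps a > 0" "ps 1 > 0"
      using ph_lb[OF a] ph_lb[OF one] ps_lb[OF a] ps_lb[OF one] c by linarith+
    have eq: "ln (ph a / ph 1) - ln (ps a / ps 1) = (ln (ph a) - ln (ps a)) - (ln (ph 1) - ln (ps 1))"
      using pos by (simp add: ln_div)
    have b1: "\<bar>ln (ph a) - ln (ps a)\<bar> \<le> \<bar>ph a - ps a\<bar> / (\<xi>/2)"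
      by (rule ln_diff_bound[OF c ph_lb[OF a] ps_lb[OF a]])
    have b2: "\<bar>ln (ph 1) - ln (ps 1)\<bar> \<le> \<bar>ph 1 - ps 1\<bar> / (\<xi>/2)"
      by (rule ln_diff_bound[OF c ph_lb[OF one] ps_lb[OF one]])
    show ?thesis
    proof (cases "a = 1")
      case True
      have "l1_dist k ph ps \<ge> 0" unfolding l1_dist_def by (simp add: sum_nonneg)
      then show ?thesis using True pos l1 assms(6) by simp
    next
      case False
    have "\<bar>ph a - ps a\<bar> + \<bar>ph 1 - ps 1\<bar> \<le> e"
      using l1_pair[OF a False, of ph ps] l1 by simp
    hence "(\<bar>ph a - ps a\<bar> + \<bar>ph 1 - ps 1\<bar>) / (\<xi>/2) \<le> e / (\<xi>/2)"
      using c by (intro divide_right_mono) auto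
    moreover have "\<bar>ln (ph a / ph 1) - ln (ps a / ps 1)\<bar> \<le> \<bar>ph a - ps a\<bar> / (\<xi>/2) + \<bar>ph 1 - ps 1\<bar> / (\<xi>/2)"
      using eq b1 b2 by linarith
    ultimately show ?thesis by (simp add: add_divide_distrib[symmetric] mult.commute)
    qed
  qed
  have entb: "\<forall>i\<in>{1..?r}. \<bar>yvec m \<mu>h \<nu>h i - yvec m \<mu>s \<nu>s i\<bar> \<le> 2 * ?e / \<xi>"
  proof
    fix i assume i: "i \<in> {1..?r}"
    show "\<bar>yvec m \<mu>h \<nu>h i - yvec m \<mu>s \<nu>s i\<bar> \<le> 2 * ?e / \<xi>"
    proof (cases "i \<le> m - 1")
      case True
      have a: "i + 1 \<in> {1..m}" using True i assms(1) by auto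
      have "\<bar>yvec m \<mu>h \<nu>h i - yvec m \<mu>s \<nu>s i\<bar> \<le> 2 * \<epsilon>\<mu> / \<xi>"
        using True lnb[OF assms(1) a assms(7) assms(11) assms(13)] by (simp add: yvec_def)
      also have "\<dots> \<le> 2 * ?e / \<xi>" using en0 assms(6) by (intro divide_right_mono) auto
      finally show ?thesis .
    next
      case False
      have bb: "i - (m - 1) + 1 \<in> {1..n}" using False i assms(2) by auto
      have "\<bar>yvec m \<mu>h \<nu>h i - yvec m \<mu>s \<nu>s i\<bar> \<le> 2 * \<epsilon>\<nu> / \<xi>"
        using False lnb[OF assms(2) bb assms(8) assms(12) assms(14)] by (simp add: yvec_def)
      also have "\<dots> \<le> 2 * ?e / \<xi>" using em0 assms(6) by (intro divide_right_mono) auto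
      finally show ?thesis .
    qed
  qed
  have Y: "vec_norm2 ?r (\<lambda>i. yvec m \<mu>h \<nu>h i - yvec m \<mu>s \<nu>s i) \<le> (sqrt (8 * real (m + n)) / \<xi>) * ?e"
  proof -
    have "vec_norm2 ?r (\<lambda>i. yvec m \<mu>h \<nu>h i - yvec m \<mu>s \<nu>s i) \<le> sqrt (real ?r) * (2 * ?e / \<xi>)"
      by (rule vec_norm_bound) (use entb in simp)
    also have "\<dots> \<le> sqrt (real (m + n)) * (2 * ?e / \<xi>)"
      using sq em0 en0 assms(6) by (intro mult_right_mono) auto
    also have "\<dots> \<le> sqrt (8 * real (m + n)) * (?e / \<xi>)"
    proof -
      have "sqrt (real (m + n)) * 2 \<le> sqrt (8 * real (m + n))"
      proof -
        have e1: "sqrt (8 * real (m + n)) = sqrt (real (m + n)) * sqrt 8"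
          by (metis real_sqrt_mult mult.commute)
        have "2 \<le> sqrt (8::real)" by (simp add: real_le_rsqrt)
        then have "sqrt (real (m + n)) * 2 \<le> sqrt (real (m + n)) * sqrt 8"
          by (intro mult_left_mono) auto
        then show ?thesis using e1 by linarith
      qed
      moreover have "?e / \<xi> \<ge> 0" using em0 en0 assms(6) by simp
      ultimately have "(sqrt (real (m + n)) * 2) * (?e / \<xi>) \<le> sqrt (8 * real (m + n)) * (?e / \<xi>)"
        by (rule mult_right_mono)
      moreover have "sqrt (real (m + n)) * (2 * ?e / \<xi>) = (sqrt (real (m + n)) * 2) * (?e / \<xi>)"
        by simp
      ultimately show ?thesis by linarith
    qed
    finally show ?thesis by simp
  qed
  show ?thesis using X Y by simp
qed

end
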